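(* Let $(\mathfrak{g}_0,[\cdot,\cdot]_0,\langle\cdot,\cdot\rangle_0)$ be a Euclidean Lie algebra, let $\mu\in\mathbb{R}$, $b\in\mathfrak{g}_0$, and let $K,D:\mathfrak{g}_0\to\mathfrak{g}_0$ be endomorphisms with $K$ skew-symmetric. Let $\mathfrak{g}=\mathbb{R}e\oplus\mathfrak{g}_0\oplus\mathbb{R}\bar e$ with the Lorentzian form $\langle\cdot,\cdot\rangle$ given by $\langle e,e\rangle=\langle\bar e,\bar e\rangle=0$, $\langle e,\bar e\rangle=1$, $\mathfrak{g}_0\perp\{e,\bar e\}$, $\langle\cdot,\cdot\rangle|_{\mathfrak{g}_0}=\langle\cdot,\cdot\rangle_0$, and the skew-symmetric bracket determined by $$[\bar e,e]=\mu e,\quad [\bar e,u]=D(u)+\langle b,u\rangle_0\,e,\quad [u,v]=[u,v]_0+\langle K(u),v\rangle_0\,e,\qquad [e,u]=0,$$ for $u,v\in\mathfrak{g}_0$. Let $\mathrm{ad}^0$ denote the adjoint representation of $\mathfrak{g}_0$. (1) Let $\omega(u,v)=\langle K(u),v\rangle_0$. Then $(\mathfrak{g},[\cdot,\cdot])$ is a Lie algebra if and only if $D$ is a derivation of $\mathfrak{g}_0$, $\omega$ is a $2$-cocycle of $\mathfrak{g}_0$ with values in $\mathbb{R}$ (trivial module), and $KD+D^*K=\mu K+J^0_b$, where $J^0_u(v)=(\mathrm{ad}^0_v)^*(u)$ for $u,v\in\mathfrak{g}_0$. (2) Assume $\mathfrak{g}$ is a Lie algebra, and let $H\in\mathfrak{g}$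 and $H^0\in\mathfrak{g}_0$ be defined by $\mathrm{tr}(\mathrm{ad}_u)=\langle H,u\rangle$ for all $u\in\mathfrak{g}$ and $\mathrm{tr}(\mathrm{ad}^0_v)=\langle H^0,v\rangle_0$ for all $v\in\mathfrak{g}_0$. Then $H=(\mu+\mathrm{tr}(D))e+H^0$. In particular $\mathfrak{g}$ is unimodular if and only if $\mathfrak{g}_0$ is unimodular and $\mathrm{tr}(D)=-\mu$.
   Context: A Euclidean Lie algebra is a finite-dimensional real Lie algebra with a positive definite inner product. Adjoints $F^*$ are taken with respect to $\langle\cdot,\cdot\rangle_0$. Unimodular means all $\mathrm{ad}_u$ are traceless. The bracket not listed ($[e,e]$, $[e,u]$) is zero; the bracket with $e$ is as given. *)

theory Defs
  imports "HOL-Analysis.Analysis"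
begin

definition lie_algebra :: "('v::real_vector \<Rightarrow> 'v \<Rightarrow> 'v) \<Rightarrow> bool" where
  "lie_algebra br \<longleftrightarrow> bilinear br \<and> (\<forall>x. br x x = 0) \<and>
     (\<forall>x y z. br x (br y z) + br y (br z x) + br z (br x y) = 0)"

definition trace :: "('v::euclidean_space \<Rightarrow> 'v) \<Rightarrow> real" where
  "trace f = (\<Sum>i\<in>Basis. inner (f i) i)"

definition derivation :: "('v::real_vector \<Rightarrow> 'v \<Rightarrow> 'v) \<Rightarrow> ('v \<Rightarrow> 'v) \<Rightarrow> bool" where
  "derivation br D \<longleftrightarrow> linear D \<and> (\<forall>u v. D (br u v) = br (D u) v + br u (D v))"

definition cocycle2 :: "('v::real_vector \<Rightarrow> 'v \<Rightarrow> 'v) \<Rightarrow> ('v \<Rightarrow> 'v \<Rightarrow> real) \<Rightarrow> bool" where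
  "cocycle2 br \<omega> \<longleftrightarrow> bilinear \<omega> \<and> (\<forall>u. \<omega> u u = 0) \<and>
     (\<forall>u v w. \<omega> (br u v) w + \<omega> (br v w) u + \<omega> (br w u) v = 0)"

definition Jop :: "('v::real_inner \<Rightarrow> 'v \<Rightarrow> 'v) \<Rightarrow> 'v \<Rightarrow> 'v \<Rightarrow> 'v" where
  "Jop br u v = adjoint (br v) u"

definition unimodular :: "('v::euclidean_space \<Rightarrow> 'v \<Rightarrow> 'v) \<Rightarrow> bool" where
  "unimodular br \<longleftrightarrow> (\<forall>u. trace (br u) = 0)"

text \<open>The extension \<open>g = \<real>e \<oplus> g\<^sub>0 \<oplus> \<real>\<bar>e\<close>: the triple \<open>(x, u, y)\<close> stands for
\<open>x e + u + y \<bar>e\<close>.\<close>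
definition lorentz_inner :: "real \<times> 'v::real_inner \<times> real \<Rightarrow> real \<times> 'v \<times> real \<Rightarrow> real" where
  "lorentz_inner p q = (case p of (x1, u1, y1) \<Rightarrow> case q of (x2, u2, y2) \<Rightarrow>
      x1 * y2 + y1 * x2 + inner u1 u2)"

definition ext_bracket ::
  "('v::real_inner \<Rightarrow> 'v \<Rightarrow> 'v) \<Rightarrow> real \<Rightarrow> 'v \<Rightarrow> ('v \<Rightarrow> 'v) \<Rightarrow> ('v \<Rightarrow> 'v)
   \<Rightarrow> real \<times> 'v \<times> real \<Rightarrow> real \<times> 'v \<times> real \<Rightarrow> real \<times> 'v \<times> real" where
  "ext_bracket br0 \<mu> b K D p q = (case p of (x1, u1, y1) \<Rightarrow> case q of (x2, u2, y2) \<Rightarrow>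
     ( \<mu> * (y1 * x2 - x1 * y2) + inner (K u1) u2 + y1 * inner b u2 - y2 * inner b u1,
       br0 u1 u2 + y1 *\<^sub>R D u2 - y2 *\<^sub>R D u1,
       0))"

end

theory Submission
  imports Defs
begin

lemma sum_Basis_prod_real:
  fixes f::"('a::euclidean_space*'b::euclidean_space)\<Rightarrow>real"
  shows "sum f Basis = sum (\<lambda>i. f (i, 0)) Basis + sum (\<lambda>i. f (0, i)) Basis"
proof -
  have "inj_on (\<lambda>u. (u::'a, 0::'b)) Basis" "inj_on (\<lambda>u. (0::'a, u::'b)) Basis"
    by (auto intro!: inj_onI Pair_inject)
  thus ?thesis
    unfolding Basis_prod_def
    by (subst sum.union_disjoint) (auto simp: Basis_prod_def sum.reindex)
qed

lemma trace_ext: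
  fixes br0 :: "'a::euclidean_space \<Rightarrow> 'a \<Rightarrow> 'a"
  shows "trace (ext_bracket br0 \<mu> b K D (x1,u1,y1)) = \<mu> * y1 + trace (br0 u1) + y1 * trace D"
proof -
  have "trace (ext_bracket br0 \<mu> b K D (x1,u1,y1)) = \<mu> * y1 + (\<Sum>k\<in>Basis. inner (br0 u1 k + y1 *\<^sub>R D k) k)"
    unfolding trace_def sum_Basis_prod_real
    by (simp add: ext_bracket_def inner_Pair_0 zero_prod_def)
  also have "\<dots> = \<mu> * y1 + trace (br0 u1) + y1 * trace D"
    by (simp add: trace_def inner_add_left sum.distrib sum_distrib_left)
  finally show ?thesis .
qed

definition Tf :: "('a::euclidean_space \<Rightarrow> 'a \<Rightarrow> 'a) \<Rightarrow> real \<Rightarrow> 'a \<Rightarrow> ('a \<Rightarrow> 'a) \<Rightarrow> ('a \<Rightarrow> 'a) \<Rightarrow> 'a \<Rightarrow> 'a \<Rightarrow> real" where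
  "Tf br0 \<mu> b K D u v = \<mu> * inner (K u) v + inner b (br0 u v) - inner (K u) (D v) + inner (K v) (D u)"

definition Dlf :: "('a::euclidean_space \<Rightarrow> 'a \<Rightarrow> 'a) \<Rightarrow> ('a \<Rightarrow> 'a) \<Rightarrow> 'a \<Rightarrow> 'a \<Rightarrow> 'a" where
  "Dlf br0 D u v = D (br0 u v) - br0 u (D v) + br0 v (D u)"

lemma jac_ext:
  fixes br0 :: "'a::euclidean_space \<Rightarrow> 'a \<Rightarrow> 'a" and \<mu> :: real and b :: 'a
  assumes B: "bilinear br0" and KL: "linear K" and DL: "linear D"
  defines "br \<equiv> ext_bracket br0 \<mu> b K D"
  shows "br (x1,u1,y1) (br (x2,u2,y2) (x3,u3,y3)) + br (x2,u2,y2) (br (x3,u3,y3) (x1,u1,y1))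
         + br (x3,u3,y3) (br (x1,u1,y1) (x2,u2,y2)) =
    (inner (K u1) (br0 u2 u3) + inner (K u2) (br0 u3 u1) + inner (K u3) (br0 u1 u2)
       + y1 * Tf br0 \<mu> b K D u2 u3 + y2 * Tf br0 \<mu> b K D u3 u1 + y3 * Tf br0 \<mu> b K D u1 u2,
     br0 u1 (br0 u2 u3) + br0 u2 (br0 u3 u1) + br0 u3 (br0 u1 u2)
       + y1 *\<^sub>R Dlf br0 D u2 u3 + y2 *\<^sub>R Dlf br0 D u3 u1 + y3 *\<^sub>R Dlf br0 D u1 u2, 0)"
proof -
  note lin = bilinear_radd[OF B] bilinear_rsub[OF B] bilinear_rmul[OF B]
     linear_add[OF DL] linear_diff[OF DL] linear_scale[OF DL]
     inner_add_right inner_diff_right inner_scaleR_right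
  show ?thesis
    unfolding br_def Tf_def Dlf_def
    apply (simp add: ext_bracket_def lin)
    apply (intro conjI)
     apply (simp add: algebra_simps)
    apply (simp add: algebra_simps)
    done
qed

lemma bilin_ext:
  fixes br0 :: "'a::euclidean_space \<Rightarrow> 'a \<Rightarrow> 'a" and \<mu> :: real and b :: 'a
  assumes B: "bilinear br0" and KL: "linear K" and DL: "linear D"
  shows "bilinear (ext_bracket br0 \<mu> b K D)"
proof -
  note lin = bilinear_radd[OF B] bilinear_rsub[OF B] bilinear_rmul[OF B]
     bilinear_ladd[OF B] bilinear_lsub[OF B] bilinear_lmul[OF B]
     linear_add[OF DL] linear_diff[OF DL] linear_scale[OF DL]
     linear_add[OF KL] linear_diff[OF KL] linear_scale[OF KL]
     inner_add_right inner_diff_right inner_scaleR_right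
     inner_add_left inner_diff_left inner_scaleR_left
  show ?thesis
    unfolding bilinear_def linear_iff
    by (simp add: split_paired_all ext_bracket_def lin algebra_simps)
qed

lemma antisym0:
  assumes "lie_algebra br" shows "br y x = - br x y"
proof -
  have B: "bilinear br" and A: "\<And>x. br x x = 0" using assms by (auto simp: lie_algebra_def)
  have "br (x + y) (x + y) = br x x + br x y + (br y x + br y y)"
    by (simp only: bilinear_ladd[OF B] bilinear_radd[OF B] ac_simps)
  then have "0 = br x y + br y x" using A by simp
  then show ?thesis by (metis minus_unique)
qed

theorem proposition4p1:
  fixes br0 :: "'a::euclidean_space \<Rightarrow> 'a \<Rightarrow> 'a"
    and \<mu> :: real and b :: 'a and K D :: "'a \<Rightarrow> 'a"
  assumes g0: "lie_algebra br0"
    and K_lin: "linear K" and K_skew: "\<forall>u v. inner (K u) v = - inner u (K v)"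
    and D_lin: "linear D"
  shows "(lie_algebra (ext_bracket br0 \<mu> b K D) \<longleftrightarrow>
            derivation br0 D \<and> cocycle2 br0 (\<lambda>u v. inner (K u) v) \<and>
            (\<forall>v. K (D v) + adjoint D (K v) = \<mu> *\<^sub>R K v + Jop br0 b v))
       \<and> (lie_algebra (ext_bracket br0 \<mu> b K D) \<longrightarrow>
            (\<forall>H H0. (\<forall>w. trace (ext_bracket br0 \<mu> b K D w) = lorentz_inner H w) \<longrightarrow>
                     (\<forall>v. trace (br0 v) = inner H0 v) \<longrightarrow>
                     H = (\<mu> + trace D, H0, 0))
          \<and> (unimodular (ext_bracket br0 \<mu> b K D) \<longleftrightarrow> unimodular br0 \<and> trace D = - \<mu>))"
proof -
  have B: "bilinear br0" and J0: "\<And>x y z. br0 x (br0 y z) + br0 y (br0 z x) + br0 z (br0 x y) = 0"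
    using g0 by (auto simp: lie_algebra_def)
  have AS: "\<And>x y. br0 y x = - br0 x y" using antisym0[OF g0] .
  have Kuu: "\<And>u. inner (K u) u = 0" using K_skew by (metis add.inverse_unique add_eq_0_iff2 neg_equal_zero inner_commute)
  have Ksk: "\<And>u v. inner (K u) v = - inner (K v) u" using K_skew by (metis inner_commute)
  let ?br = "ext_bracket br0 \<mu> b K D"
  have bil: "bilinear ?br" by (rule bilin_ext[OF B K_lin D_lin])
  have alt: "\<forall>x. ?br x x = 0"
    apply (simp add: split_paired_all ext_bracket_def Kuu zero_prod_def)
    by (use g0 in \<open>simp add: lie_algebra_def\<close>)
  note JF = jac_ext[OF B K_lin D_lin, where \<mu>=\<mu> and b=b]
  let ?C = "\<lambda>u1 u2 u3. inner (K u1) (br0 u2 u3) + inner (K u2) (br0 u3 u1) + inner (K u3) (br0 u1 u2)"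
  have part1: "lie_algebra ?br \<longleftrightarrow>
            derivation br0 D \<and> cocycle2 br0 (\<lambda>u v. inner (K u) v) \<and>
            (\<forall>v. K (D v) + adjoint D (K v) = \<mu> *\<^sub>R K v + Jop br0 b v)"
  proof
    assume L: "lie_algebra ?br"
    then have JJ: "\<And>x y z. ?br x (?br y z) + ?br y (?br z x) + ?br z (?br x y) = 0"
      unfolding lie_algebra_def by blast
    have C0: "?C u1 u2 u3 = 0" for u1 u2 u3
      using JJ[of "(0,u1,0)" "(0,u2,0)" "(0,u3,0)"] unfolding JF by (simp add: zero_prod_def)
    have T0: "Tf br0 \<mu> b K D u2 u3 = 0" and D0: "Dlf br0 D u2 u3 = 0" for u2 u3
      using JJ[of "(0,0,1)" "(0,u2,0)" "(0,u3,0)"] C0[of 0 u2 u3] J0[of 0 u2 u3] unfolding JF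
      by (simp_all add: zero_prod_def)
    have "derivation br0 D"
      unfolding derivation_def
    proof (intro conjI allI D_lin)
      fix u v show "D (br0 u v) = br0 (D u) v + br0 u (D v)"
        using D0[of u v] AS[of "D u" v] by (simp add: Dlf_def algebra_simps)
    qed
    moreover have "cocycle2 br0 (\<lambda>u v. inner (K u) v)"
      unfolding cocycle2_def
    proof (intro conjI allI)
      show "bilinear (\<lambda>u v. inner (K u) v)"
        unfolding bilinear_def linear_iff
        by (simp add: linear_add[OF K_lin] linear_scale[OF K_lin] inner_add_left inner_add_right)
      fix u v w
      show "inner (K u) u = 0" by (rule Kuu)
      show "inner (K (br0 u v)) w + inner (K (br0 v w)) u + inner (K (br0 w u)) v = 0"
        using C0[of w u v] Ksk[of "br0 u v" w] Ksk[of "br0 v w" u] Ksk[of "br0 w u" v] by simp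
    qed
    moreover have "\<forall>v. K (D v) + adjoint D (K v) = \<mu> *\<^sub>R K v + Jop br0 b v"
    proof
      fix v
      have lb: "linear (br0 v)" using B unfolding bilinear_def by auto
      show "K (D v) + adjoint D (K v) = \<mu> *\<^sub>R K v + Jop br0 b v"
      proof (rule vector_eq_rdot[THEN iffD1], rule allI)
        fix w
        show "inner (K (D v) + adjoint D (K v)) w = inner (\<mu> *\<^sub>R K v + Jop br0 b v) w"
          using T0[of v w] Ksk[of w "D v"] inner_commute[of "K (D v)" w]
          by (simp add: Tf_def Jop_def inner_add_left adjoint_clauses[OF D_lin] adjoint_clauses[OF lb] inner_commute[of b])
      qed
    qed
    ultimately show "derivation br0 D \<and> cocycle2 br0 (\<lambda>u v. inner (K u) v) \<and>
            (\<forall>v. K (D v) + adjoint D (K v) = \<mu> *\<^sub>R K v + Jop br0 b v)" by blast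
  next
    assume R: "derivation br0 D \<and> cocycle2 br0 (\<lambda>u v. inner (K u) v) \<and>
            (\<forall>v. K (D v) + adjoint D (K v) = \<mu> *\<^sub>R K v + Jop br0 b v)"
    have D0: "Dlf br0 D u v = 0" for u v
      using R AS[of "D u" v] by (simp add: Dlf_def derivation_def)
    have C0: "?C u1 u2 u3 = 0" for u1 u2 u3
    proof -
      have "inner (K (br0 u2 u3)) u1 + inner (K (br0 u3 u1)) u2 + inner (K (br0 u1 u2)) u3 = 0"
        using R by (simp add: cocycle2_def)
      then show ?thesis
        using Ksk[of "br0 u2 u3" u1] Ksk[of "br0 u3 u1" u2] Ksk[of "br0 u1 u2" u3] by simp
    qed
    have T0: "Tf br0 \<mu> b K D v w = 0" for v w
    proof -
      have lb: "linear (br0 v)" using B unfolding bilinear_def by auto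
      have "inner (K (D v) + adjoint D (K v)) w = inner (\<mu> *\<^sub>R K v + Jop br0 b v) w"
        using R by simp
      then show ?thesis
        using Ksk[of w "D v"] inner_commute[of "K (D v)" w]
        by (simp add: Tf_def Jop_def inner_add_left adjoint_clauses[OF D_lin] adjoint_clauses[OF lb] inner_commute[of b])
    qed
    have "\<forall>x y z. ?br x (?br y z) + ?br y (?br z x) + ?br z (?br x y) = 0"
      by (simp add: split_paired_all JF C0 T0 D0 J0 zero_prod_def)
    then show "lie_algebra ?br" using bil alt by (simp add: lie_algebra_def)
  qed
  have tr: "\<And>x1 u1 y1. trace (?br (x1,u1,y1)) = \<mu> * y1 + trace (br0 u1) + y1 * trace D"
    by (rule trace_ext)
  have tr0: "trace (br0 0) = 0"
    by (simp add: trace_def bilinear_lzero[OF B])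
  have part2: "\<forall>H H0. (\<forall>w. trace (?br w) = lorentz_inner H w) \<longrightarrow>
                     (\<forall>v. trace (br0 v) = inner H0 v) \<longrightarrow>
                     H = (\<mu> + trace D, H0, 0)"
  proof (intro allI impI)
    fix H :: "real \<times> 'a \<times> real" and H0
    assume h: "\<forall>w. trace (?br w) = lorentz_inner H w" and h0: "\<forall>v. trace (br0 v) = inner H0 v"
    obtain h1 hu h2 where Hd: "H = (h1, hu, h2)" by (cases H) auto
    have e: "\<mu> * r + inner H0 q + r * trace D = h1 * r + h2 * p + inner hu q" for p q r
      using h tr h0 unfolding Hd lorentz_inner_def by (metis (no_types, lifting) case_prod_conv)
    have "\<mu> * 0 + inner H0 0 + 0 * trace D = h1 * 0 + h2 * 1 + inner hu 0" by (rule e)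
    then have "h2 = 0" by simp
    moreover have "\<mu> * 1 + inner H0 0 + 1 * trace D = h1 * 1 + h2 * 0 + inner hu 0" by (rule e)
    then have "h1 = \<mu> + trace D" by simp
    moreover have "hu = H0"
    proof -
      have "inner H0 q = inner hu q" for q
        using e[where p=0 and r=0 and q=q] by simp
      then show ?thesis by (metis vector_eq_rdot inner_commute)
    qed
    ultimately show "H = (\<mu> + trace D, H0, 0)" using Hd by simp
  qed
  have part3: "unimodular ?br \<longleftrightarrow> unimodular br0 \<and> trace D = - \<mu>"
  proof
    assume u: "unimodular ?br"
    have "trace (br0 u) = 0" for u using u[unfolded unimodular_def, rule_format, of "(0,u,0)"] tr by simp
    moreover have "trace D = - \<mu>" using u[unfolded unimodular_def, rule_format, of "(0,0,1)"] tr tr0 by simp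
    ultimately show "unimodular br0 \<and> trace D = - \<mu>" by (simp add: unimodular_def)
  next
    assume "unimodular br0 \<and> trace D = - \<mu>"
    then show "unimodular ?br" by (simp add: unimodular_def split_paired_all tr algebra_simps)
  qed
  show ?thesis using part1 part2 part3 by blast
qed

end
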